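(* Let $\Pi_n$ be a PARITY$_n$ program. Suppose $\Pi_n$ contains a rule $x\leftarrow B$ (with $x$ a variable) such that $not\ not\ x\in B$ and $S(B)=\{J\}$ for a single string $J$ which is even. Then the program $\Pi_n'=\Pi_n\setminus\{x\leftarrow B\}$ satisfies $Ans(\Pi_n')=$ PARITY$_n$.
   Context: A rule element is one of $\top$, $\bot$, $x$, $not\ x$, $not\ not\ x$, where $x$ is a variable. A (canonical) rule is $H\leftarrow B$ with $H$ a variable or $\bot$ and $B$ a finite set of rule elements; a canonical program is a finite set of rules. For a set of variables $I$: $I\models\top$; $I\not\models\bot$; $I\models x$ iff $I\models not\ not\ x$ iff $x\in I$; $I\models not\ x$ iff $x\notin I$; $I\models B$ iff $I$ satisfies every element of $B$; $I$ is closed under $H\leftarrow B$ if $I\models B$ implies $I\models H$. The reduct $\Pi^I$ replaces $not\ not\ x$ by $\top$ if $x\in I$ else $\bot$, and $not\ x$ by $\top$ if $x\notin I$ else $\bot$; $I$ is an answer set of $\Pi$ if $I$ is the least set closed under all rules of $\Pi^I$; $Ans(\Pi)$ is the set of answer sets; $var(\Pi)$ is the set of variables occurring in $\Pi$. Strings $w\in\{0,1\}^n$ are identified with $\{x_i:w_i=1\}$; PARITY$_n$ is the set of strings in $\{0,1\}^n$ with an odd number of 1's (odd strings; the others are even); a PARITY$_n$ program is a canonical program $\Pi$ with $var(\Pi)=\{x_1,\dots,x_n\}$ and $Ans(\Pi)=$ PARITY$_n$. For a set $B$ of rule elements, $S(B)=\{I\subseteq\{x_1,\dots,x_n\}: I\models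 B\}$. *)

theory Defs
  imports Main
begin

datatype elem = ETop | EBot | Pos nat | Neg nat | NNeg nat

datatype head = HVar nat | HBot

type_synonym rule = "head \<times> elem set"
type_synonym program = "rule set"

definition canonical_program :: "program \<Rightarrow> bool" where
  "canonical_program P \<longleftrightarrow> finite P \<and> (\<forall>r\<in>P. finite (snd r))"

fun sat_elem :: "nat set \<Rightarrow> elem \<Rightarrow> bool" where
  "sat_elem I ETop = True"
| "sat_elem I EBot = False"
| "sat_elem I (Pos x) = (x \<in> I)"
| "sat_elem I (Neg x) = (x \<notin> I)"
| "sat_elem I (NNeg x) = (x \<in> I)"

fun sat_head :: "nat set \<Rightarrow> head \<Rightarrow> bool" where
  "sat_head I (HVar x) = (x \<in> I)"
| "sat_head I HBot = False"

definition sat_body :: "nat set \<Rightarrow> elem set \<Rightarrow> bool" where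
  "sat_body I B \<longleftrightarrow> (\<forall>e\<in>B. sat_elem I e)"

definition closed_rule :: "nat set \<Rightarrow> rule \<Rightarrow> bool" where
  "closed_rule I r \<longleftrightarrow> (sat_body I (snd r) \<longrightarrow> sat_head I (fst r))"

fun red_elem :: "nat set \<Rightarrow> elem \<Rightarrow> elem" where
  "red_elem I (NNeg x) = (if x \<in> I then ETop else EBot)"
| "red_elem I (Neg x) = (if x \<notin> I then ETop else EBot)"
| "red_elem I e = e"

definition reduct :: "program \<Rightarrow> nat set \<Rightarrow> program" where
  "reduct P I = (\<lambda>(H, B). (H, red_elem I ` B)) ` P"

definition answer_set :: "program \<Rightarrow> nat set \<Rightarrow> bool" where
  "answer_set P I \<longleftrightarrow>
     (\<forall>r\<in>reduct P I. closed_rule I r) \<and>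
     (\<forall>J. (\<forall>r\<in>reduct P I. closed_rule J r) \<longrightarrow> I \<subseteq> J)"

definition Ans :: "program \<Rightarrow> nat set set" where
  "Ans P = {I. answer_set P I}"

fun elem_vars :: "elem \<Rightarrow> nat set" where
  "elem_vars (Pos x) = {x}"
| "elem_vars (Neg x) = {x}"
| "elem_vars (NNeg x) = {x}"
| "elem_vars _ = {}"

fun head_vars :: "head \<Rightarrow> nat set" where
  "head_vars (HVar x) = {x}"
| "head_vars HBot = {}"

definition var :: "program \<Rightarrow> nat set" where
  "var P = (\<Union>(H, B)\<in>P. head_vars H \<union> (\<Union>e\<in>B. elem_vars e))"

text \<open>Strings in {0,1}^n are identified with subsets of {1..n}.\<close>
definition PARITY :: "nat \<Rightarrow> nat set set" where
  "PARITY n = {I. I \<subseteq> {1..n} \<and> odd (card I)}"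

definition parity_program :: "nat \<Rightarrow> program \<Rightarrow> bool" where
  "parity_program n P \<longleftrightarrow> canonical_program P \<and> var P = {1..n} \<and> Ans P = PARITY n"

definition S :: "nat \<Rightarrow> elem set \<Rightarrow> nat set set" where
  "S n B = {I. I \<subseteq> {1..n} \<and> sat_body I B}"

end

theory Submission
  imports Defs
begin

lemma closed_reduct_iff:
  "(\<forall>r\<in>reduct P I. closed_rule J r) \<longleftrightarrow>
   (\<forall>H B'. (H, B') \<in> P \<longrightarrow> sat_body J (red_elem I ` B') \<longrightarrow> sat_head J H)"
  unfolding reduct_def closed_rule_def by fastforce

lemma redA_elem: "J \<subseteq> I \<Longrightarrow> sat_elem J (red_elem I e) \<Longrightarrow> sat_elem I e"
  by (cases e) (auto split: if_splits)

lemma redA: "J \<subseteq> I \<Longrightarrow> sat_body J (red_elem I ` B) \<Longrightarrow> sat_body I B"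
  unfolding sat_body_def using redA_elem by blast

lemma redM_elem: "J \<subseteq> K \<Longrightarrow> sat_elem J (red_elem I e) \<Longrightarrow> sat_elem K (red_elem I e)"
  by (cases e) (auto split: if_splits)

lemma redM: "J \<subseteq> K \<Longrightarrow> sat_body J (red_elem I ` B) \<Longrightarrow> sat_body K (red_elem I ` B)"
  unfolding sat_body_def using redM_elem by blast

lemma sat_head_int: "sat_head J H \<Longrightarrow> sat_head I H \<Longrightarrow> sat_head (J \<inter> I) H"
  by (cases H) auto

theorem mainTheorem10:
  fixes n :: nat and P :: program and x :: nat and B :: "elem set" and J :: "nat set"
  assumes "parity_program n P"
    and "(HVar x, B) \<in> P"
    and "NNeg x \<in> B"
    and "S n B = {J}"
    and "even (card J)"
  shows "Ans (P - {(HVar x, B)}) = PARITY n"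
proof -
  have AP: "Ans P = PARITY n" and VP: "var P = {1..n}" using assms(1) parity_program_def by auto
  let ?P' = "P - {(HVar x, B)}"
  have "I \<in> Ans ?P'" if I: "I \<in> Ans P" for I
  proof -
    have Ipar: "I \<subseteq> {1..n}" "odd (card I)" using I AP PARITY_def by auto
    have ans: "answer_set P I" using I Ans_def by auto
    have clI: "\<forall>H B'. (H, B') \<in> P \<longrightarrow> sat_body I (red_elem I ` B') \<longrightarrow> sat_head I H"
      using ans unfolding answer_set_def closed_reduct_iff by blast
    have min: "\<And>K. (\<forall>H B'. (H, B') \<in> P \<longrightarrow> sat_body K (red_elem I ` B') \<longrightarrow> sat_head K H) \<Longrightarrow> I \<subseteq> K"
      using ans unfolding answer_set_def closed_reduct_iff by blast
    have "I \<subseteq> J'" if cl: "\<forall>H B'. (H, B') \<in> ?P' \<longrightarrow> sat_body J' (red_elem I ` B') \<longrightarrow> sat_head J' H" for J'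
    proof -
      have "\<forall>H B'. (H, B') \<in> P \<longrightarrow> sat_body (J' \<inter> I) (red_elem I ` B') \<longrightarrow> sat_head (J' \<inter> I) H"
      proof (intro allI impI)
        fix H B' assume r: "(H, B') \<in> P" and sb: "sat_body (J' \<inter> I) (red_elem I ` B')"
        show "sat_head (J' \<inter> I) H"
        proof (cases "(H, B') = (HVar x, B)")
          case True
          then have "sat_body I B" using sb redA[of "J' \<inter> I" I B] by auto
          then have "I \<in> S n B" using Ipar S_def by auto
          then have "I = J" using assms(4) by auto
          then show ?thesis using Ipar assms(5) by auto
        next
          case False
          have "sat_body J' (red_elem I ` B')" using sb redM[of "J' \<inter> I" J'] by auto
          then have h1: "sat_head J' H" using cl r False by auto
          have "sat_body I (red_elem I ` B')" using sb redM[of "J' \<inter> I" I] by auto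
          then have "sat_head I H" using clI r by auto
          then show ?thesis using h1 sat_head_int by auto
        qed
      qed
      then show ?thesis using min by blast
    qed
    moreover have "\<forall>H B'. (H, B') \<in> ?P' \<longrightarrow> sat_body I (red_elem I ` B') \<longrightarrow> sat_head I H"
      using clI by auto
    ultimately show ?thesis unfolding Ans_def answer_set_def closed_reduct_iff by blast
  qed
  moreover have "I \<in> Ans P" if I: "I \<in> Ans ?P'" for I
  proof -
    have ans: "answer_set ?P' I" using I Ans_def by auto
    have clI: "\<forall>H B'. (H, B') \<in> ?P' \<longrightarrow> sat_body I (red_elem I ` B') \<longrightarrow> sat_head I H"
      using ans unfolding answer_set_def closed_reduct_iff by blast
    have min: "\<And>K. (\<forall>H B'. (H, B') \<in> ?P' \<longrightarrow> sat_body K (red_elem I ` B') \<longrightarrow> sat_head K H) \<Longrightarrow> I \<subseteq> K"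
      using ans unfolding answer_set_def closed_reduct_iff by blast
    have "sat_head I (HVar x)" if "sat_body I (red_elem I ` B)"
    proof (rule ccontr)
      assume "\<not> sat_head I (HVar x)"
      then have "x \<notin> I" by simp
      then have "EBot \<in> red_elem I ` B" using assms(3) by force
      then show False using that sat_body_def by force
    qed
    then have "\<forall>H B'. (H, B') \<in> P \<longrightarrow> sat_body I (red_elem I ` B') \<longrightarrow> sat_head I H"
      using clI by blast
    moreover have "I \<subseteq> K" if "\<forall>H B'. (H, B') \<in> P \<longrightarrow> sat_body K (red_elem I ` B') \<longrightarrow> sat_head K H" for K
      using min that by blast
    ultimately show ?thesis unfolding Ans_def answer_set_def closed_reduct_iff by blast
  qed
  ultimately show ?thesis using AP by blast
qed

end
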